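(* Let $\overrightarrow{U}(t)$ be a closed unit timelike dual curve in the 3-dimensional dual Lorentzian space with dual Frenet frame $\{\overrightarrow{U_1},\overrightarrow{U_2},\overrightarrow{U_3}\}$, dual curvature $\kappa$ and dual torsion $\tau$, let $\Phi=\varphi+\varepsilon\varphi^*$ be a constant dual number, let $(V_1)$ be the parallel ruled surface of $(U_1)$, corresponding to $\overrightarrow{V_1}=\cosh\Phi\,\overrightarrow{U_1}+\sinh\Phi\,\overrightarrow{U_3}$, and let $(V_3)$ be the closed ruled surface corresponding to $\overrightarrow{V_3}=-\sinh\Phi\,\overrightarrow{U_1}-\cosh\Phi\,\overrightarrow{U_3}$. With $P=p+\varepsilon p^*=\kappa\cosh\Phi+\tau\sinh\Phi$ and $Q=q+\varepsilon q^*=-\kappa\sinh\Phi-\tau\cosh\Phi$, the pitch, the dual angle of pitch and the drall of $(V_3)$ are $$L_{V_3}=\oint p^*\,dt,\qquad \Lambda_{V_3}=-\oint P\,dt,\qquad P_{V_3}=\frac{q^*}{q}.$$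
   Context: Dual numbers are $\lambda+\varepsilon\lambda^*$ with $\lambda,\lambda^*\in\mathbb{R}$ and $\varepsilon^2=0$; dual vectors are $\overrightarrow{A}=\overrightarrow{a}+\varepsilon\overrightarrow{a}^*$ with $\overrightarrow{a},\overrightarrow{a}^*\in\mathbb{R}^3$. The Lorentzian inner product on $\mathbb{R}^3$ is $\langle a,b\rangle=-a_1b_1+a_2b_2+a_3b_3$, extended to dual vectors by $\langle \overrightarrow{A},\overrightarrow{B}\rangle=\langle\overrightarrow{a},\overrightarrow{b}\rangle+\varepsilon(\langle\overrightarrow{a},\overrightarrow{b}^*\rangle+\langle\overrightarrow{a}^*,\overrightarrow{b}\rangle)$. For a dual number $\Phi=\varphi+\varepsilon\varphi^*$: $\sinh\Phi=\sinh\varphi+\varepsilon\varphi^*\cosh\varphi$, $\cosh\Phi=\cosh\varphi+\varepsilon\varphi^*\sinh\varphi$. The closed unit timelike dual curve $\overrightarrow{U}(t)$ (integrals $\oint$ over one closed period of $t$) has Frenet frame $\overrightarrow{U_1}=\overrightarrow{U}$ (timelike), $\overrightarrow{U_2},\overrightarrow{U_3}$ (spacelike), mutually orthogonal unit dual vectors, satisfying $\overrightarrow{U_1}'=\kappa\overrightarrow{U_2}$, $\overrightarrow{U_2}'=\kappa\overrightarrow{U_1}-\tau\overrightarrow{U_3}$, $\overrightarrow{U_3}'=\tau\overrightarrow{U_2}$. Set $\overrightarrow{V_2}=\overrightarrow{U_2}$; then $\overrightarrow{V_1}'=P\overrightarrow{V_2}$, $\overrightarrow{V_2}'=P\overrightarrow{V_1}-Q\overrightarrow{V_3}$,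 $\overrightarrow{V_3}'=Q\overrightarrow{V_2}$. Write $\overrightarrow{V_i}=\overrightarrow{v_i}+\varepsilon\overrightarrow{v_i}^*$. The dual Steiner vector is taken (frame vectors written outside the integrals) as $\overrightarrow{D}=\overrightarrow{d}+\varepsilon\overrightarrow{d}^*=\overrightarrow{U_1}\oint\tau\,dt-\overrightarrow{U_3}\oint\kappa\,dt=-\overrightarrow{V_1}\oint Q\,dt+\overrightarrow{V_3}\oint P\,dt$, so $\overrightarrow{d}=-\overrightarrow{v_1}\oint q\,dt+\overrightarrow{v_3}\oint p\,dt$, $\overrightarrow{d}^*=-\overrightarrow{v_1}\oint q^*dt-\overrightarrow{v_1}^*\oint q\,dt+\overrightarrow{v_3}\oint p^*dt+\overrightarrow{v_3}^*\oint p\,dt$. For the closed ruled surface corresponding to a unit dual curve $\overrightarrow{X}=\overrightarrow{x}+\varepsilon\overrightarrow{x}^*$: pitch $L_X=\langle\overrightarrow{d},\overrightarrow{x}^*\rangle+\langle\overrightarrow{d}^*,\overrightarrow{x}\rangle$, dual angle of pitch $\Lambda_X=-\langle\overrightarrow{D},\overrightarrow{X}\rangle$, drall $P_X=\langle d\overrightarrow{x},d\overrightarrow{x}^*\rangle/\langle d\overrightarrow{x},d\overrightarrow{x}\rangle$. *)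

theory Defs
  imports "HOL-Analysis.Analysis"
begin

text \<open>Dual numbers  lambda + eps lambda*  are pairs (lambda, lambda*);
  dual vectors  a + eps a*  are pairs (a, a*) of vectors of R^3.\<close>

type_synonym dnum = "real \<times> real"
type_synonym dvec = "(real^3) \<times> (real^3)"

definition dadd :: "dnum \<Rightarrow> dnum \<Rightarrow> dnum" where
  "dadd x y = (fst x + fst y, snd x + snd y)"

definition dneg :: "dnum \<Rightarrow> dnum" where
  "dneg x = (- fst x, - snd x)"

definition dmul :: "dnum \<Rightarrow> dnum \<Rightarrow> dnum" where
  "dmul x y = (fst x * fst y, fst x * snd y + snd x * fst y)"

definition dsinh :: "dnum \<Rightarrow> dnum" where
  "dsinh x = (sinh (fst x), snd x * cosh (fst x))"

definition dcosh :: "dnum \<Rightarrow> dnum" where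
  "dcosh x = (cosh (fst x), snd x * sinh (fst x))"

definition dvadd :: "dvec \<Rightarrow> dvec \<Rightarrow> dvec" where
  "dvadd A B = (fst A + fst B, snd A + snd B)"

definition dvneg :: "dvec \<Rightarrow> dvec" where
  "dvneg A = (- fst A, - snd A)"

definition dscale :: "dnum \<Rightarrow> dvec \<Rightarrow> dvec" where
  "dscale l A = (fst l *\<^sub>R fst A, fst l *\<^sub>R snd A + snd l *\<^sub>R fst A)"

definition linner :: "real^3 \<Rightarrow> real^3 \<Rightarrow> real" where
  "linner a b = - (a$1 * b$1) + a$2 * b$2 + a$3 * b$3"

definition dinner :: "dvec \<Rightarrow> dvec \<Rightarrow> dnum" where
  "dinner A B = (linner (fst A) (fst B),
                 linner (fst A) (snd B) + linner (snd A) (fst B))"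

definition has_dvec_derivative :: "(real \<Rightarrow> dvec) \<Rightarrow> dvec \<Rightarrow> real \<Rightarrow> bool" where
  "has_dvec_derivative X X' t \<longleftrightarrow>
     ((\<lambda>s. fst (X s)) has_vector_derivative fst X') (at t) \<and>
     ((\<lambda>s. snd (X s)) has_vector_derivative snd X') (at t)"

text \<open>Closed integral over one period [0, T] of a dual-number valued function.\<close>
definition dint :: "real \<Rightarrow> (real \<Rightarrow> dnum) \<Rightarrow> dnum" where
  "dint T f = (integral {0..T} (\<lambda>s. fst (f s)), integral {0..T} (\<lambda>s. snd (f s)))"

text \<open>Dual Steiner vector at parameter t (frame vectors outside the integrals):
  D = U1 * oint tau - U3 * oint kappa.\<close>
definition steiner :: "real \<Rightarrow> (real \<Rightarrow> dnum) \<Rightarrow> (real \<Rightarrow> dnum)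
    \<Rightarrow> (real \<Rightarrow> dvec) \<Rightarrow> (real \<Rightarrow> dvec) \<Rightarrow> real \<Rightarrow> dvec" where
  "steiner T \<kappa> \<tau> U1 U3 t =
     dvadd (dscale (dint T \<tau>) (U1 t)) (dvneg (dscale (dint T \<kappa>) (U3 t)))"

definition pitch :: "dvec \<Rightarrow> dvec \<Rightarrow> real" where
  "pitch D X = linner (fst D) (snd X) + linner (snd D) (fst X)"

definition angle_of_pitch :: "dvec \<Rightarrow> dvec \<Rightarrow> dnum" where
  "angle_of_pitch D X = dneg (dinner D X)"

definition drall :: "(real \<Rightarrow> dvec) \<Rightarrow> real \<Rightarrow> real" where
  "drall X t =
     (let dx = vector_derivative (\<lambda>s. fst (X s)) (at t);
          dxs = vector_derivative (\<lambda>s. snd (X s)) (at t)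
      in linner dx dxs / linner dx dx)"

end

theory Submission
  imports Defs
begin


lemma linner_sym: "linner a b = linner b a"
  unfolding linner_def by (simp add: mult.commute)
lemma linner_add_l[simp]: "linner (x + y) z = linner x z + linner y z"
  unfolding linner_def by (simp add: algebra_simps)
lemma linner_add_r[simp]: "linner z (x + y) = linner z x + linner z y"
  unfolding linner_def by (simp add: algebra_simps)
lemma linner_scale_l[simp]: "linner (c *\<^sub>R x) z = c * linner x z"
  unfolding linner_def by (simp add: algebra_simps)
lemma linner_scale_r[simp]: "linner z (c *\<^sub>R x) = c * linner z x"
  unfolding linner_def by (simp add: algebra_simps)
lemma linner_neg_l[simp]: "linner (- x) z = - linner x z"
  unfolding linner_def by (simp add: algebra_simps)
lemma linner_neg_r[simp]: "linner z (- x) = - linner z x"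
  unfolding linner_def by (simp add: algebra_simps)
lemma linner_diff_l[simp]: "linner (x - y) z = linner x z - linner y z"
  unfolding linner_def by (simp add: algebra_simps)
lemma linner_diff_r[simp]: "linner z (x - y) = linner z x - linner z y"
  unfolding linner_def by (simp add: algebra_simps)

theorem theorem2p3:
  fixes U1 U2 U3 :: "real \<Rightarrow> dvec"
    and \<kappa> \<tau> :: "real \<Rightarrow> dnum"
    and \<Phi> :: dnum
    and T :: real
    and V1 V3 :: "real \<Rightarrow> dvec"
    and P Q :: "real \<Rightarrow> dnum"
    and D :: "real \<Rightarrow> dvec"
  assumes T_pos: "T > 0"
    and closed: "\<And>t. U1 (t + T) = U1 t" "\<And>t. U2 (t + T) = U2 t" "\<And>t. U3 (t + T) = U3 t"
                "\<And>t. \<kappa> (t + T) = \<kappa> t" "\<And>t. \<tau> (t + T) = \<tau> t"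
    and cont: "continuous_on UNIV (\<lambda>t. fst (\<kappa> t))" "continuous_on UNIV (\<lambda>t. snd (\<kappa> t))"
              "continuous_on UNIV (\<lambda>t. fst (\<tau> t))" "continuous_on UNIV (\<lambda>t. snd (\<tau> t))"
    and frame: "\<And>t. dinner (U1 t) (U1 t) = (-1, 0)"
               "\<And>t. dinner (U2 t) (U2 t) = (1, 0)"
               "\<And>t. dinner (U3 t) (U3 t) = (1, 0)"
               "\<And>t. dinner (U1 t) (U2 t) = (0, 0)"
               "\<And>t. dinner (U1 t) (U3 t) = (0, 0)"
               "\<And>t. dinner (U2 t) (U3 t) = (0, 0)"
    and frenet: "\<And>t. has_dvec_derivative U1 (dscale (\<kappa> t) (U2 t)) t"
                "\<And>t. has_dvec_derivative U2
                       (dvadd (dscale (\<kappa> t) (U1 t)) (dvneg (dscale (\<tau> t) (U3 t)))) t"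
                "\<And>t. has_dvec_derivative U3 (dscale (\<tau> t) (U2 t)) t"
    and V1_def: "V1 = (\<lambda>t. dvadd (dscale (dcosh \<Phi>) (U1 t)) (dscale (dsinh \<Phi>) (U3 t)))"
    and V3_def: "V3 = (\<lambda>t. dvadd (dscale (dneg (dsinh \<Phi>)) (U1 t)) (dscale (dneg (dcosh \<Phi>)) (U3 t)))"
    and P_def: "P = (\<lambda>t. dadd (dmul (\<kappa> t) (dcosh \<Phi>)) (dmul (\<tau> t) (dsinh \<Phi>)))"
    and Q_def: "Q = (\<lambda>t. dadd (dneg (dmul (\<kappa> t) (dsinh \<Phi>))) (dneg (dmul (\<tau> t) (dcosh \<Phi>))))"
    and D_def: "D = steiner T \<kappa> \<tau> U1 U3"
  shows "\<forall>t. pitch (D t) (V3 t) = integral {0..T} (\<lambda>s. snd (P s))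
           \<and> angle_of_pitch (D t) (V3 t) = dneg (dint T P)
           \<and> drall V3 t = snd (Q t) / fst (Q t)"
proof (intro allI)
  fix t
  define u1 where "u1 = fst (U1 t)"
  define u1s where "u1s = snd (U1 t)"
  define u2 where "u2 = fst (U2 t)"
  define u2s where "u2s = snd (U2 t)"
  define u3 where "u3 = fst (U3 t)"
  define u3s where "u3s = snd (U3 t)"
  define ph where "ph = fst \<Phi>"
  define phs where "phs = snd \<Phi>"
  have f1: "linner u1 u1 = -1" "linner u1 u1s = 0"
    using frame(1)[of t] unfolding dinner_def u1_def u1s_def
    by (auto simp: linner_sym[of "snd (U1 t)"])
  have f3: "linner u3 u3 = 1" "linner u3 u3s = 0"
    using frame(3)[of t] unfolding dinner_def u3_def u3s_def
    by (auto simp: linner_sym[of "snd (U3 t)"])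
  have f2: "linner u2 u2 = 1" "linner u2 u2s = 0"
    using frame(2)[of t] unfolding dinner_def u2_def u2s_def
    by (auto simp: linner_sym[of "snd (U2 t)"])
  have f13: "linner u1 u3 = 0" "linner u1 u3s + linner u1s u3 = 0"
    using frame(5)[of t] unfolding dinner_def u1_def u1s_def u3_def u3s_def by auto
  have ik: "(\<lambda>s. fst (\<kappa> s)) integrable_on {0..T}" "(\<lambda>s. snd (\<kappa> s)) integrable_on {0..T}"
    "(\<lambda>s. fst (\<tau> s)) integrable_on {0..T}" "(\<lambda>s. snd (\<tau> s)) integrable_on {0..T}"
    using cont by (meson continuous_on_subset integrable_continuous_interval subset_UNIV)+
  define a where "a = integral {0..T} (\<lambda>s. fst (\<kappa> s))"
  define as where "as = integral {0..T} (\<lambda>s. snd (\<kappa> s))"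
  define b where "b = integral {0..T} (\<lambda>s. fst (\<tau> s))"
  define bs where "bs = integral {0..T} (\<lambda>s. snd (\<tau> s))"
  have IP1: "integral {0..T} (\<lambda>s. fst (P s)) = a * cosh ph + b * sinh ph"
    unfolding P_def dadd_def dmul_def dcosh_def dsinh_def a_def b_def ph_def
    using ik by (simp add: integral_add integrable_on_mult_left)
  have cm: "\<And>(c::real) f. f integrable_on {0..T} \<Longrightarrow> (\<lambda>s. c * f s) integrable_on {0..T}"
    by (rule integrable_on_mult_right)
  have e: "(\<lambda>s. snd (P s)) = (\<lambda>s. (phs * sinh ph) * fst (\<kappa> s) + cosh ph * snd (\<kappa> s)
       + ((phs * cosh ph) * fst (\<tau> s) + sinh ph * snd (\<tau> s)))"
    unfolding P_def dadd_def dmul_def dcosh_def dsinh_def ph_def phs_def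
    by (auto simp: algebra_simps)
  have IP2: "integral {0..T} (\<lambda>s. snd (P s)) =
      a * (phs * sinh ph) + as * cosh ph + b * (phs * cosh ph) + bs * sinh ph"
    unfolding e a_def as_def b_def bs_def
    by (simp add: integral_add cm ik integrable_add integral_mult_right algebra_simps)
  have DI: "dinner (D t) (V3 t) = (a * cosh ph + b * sinh ph,
      a * (phs * sinh ph) + as * cosh ph + b * (phs * cosh ph) + bs * sinh ph)"
    unfolding D_def V3_def steiner_def dinner_def dvadd_def dvneg_def dscale_def dint_def dneg_def
      dsinh_def dcosh_def
    apply (simp add: u1_def[symmetric] u1s_def[symmetric] u3_def[symmetric] u3s_def[symmetric]
       a_def[symmetric] as_def[symmetric] b_def[symmetric] bs_def[symmetric] ph_def[symmetric] phs_def[symmetric])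
    using f1 f3 f13(1) f13(2)[unfolded add_eq_0_iff2] linner_sym[of u3 u1] linner_sym[of u3s u1] linner_sym[of u3 u1s]
       linner_sym[of u1s u1] linner_sym[of u3s u3]
    by (simp add: algebra_simps)
  have "pitch (D t) (V3 t) = snd (dinner (D t) (V3 t))"
    unfolding pitch_def dinner_def by simp
  then have A: "pitch (D t) (V3 t) = integral {0..T} (\<lambda>s. snd (P s))"
    using DI IP2 by simp
  have B: "angle_of_pitch (D t) (V3 t) = dneg (dint T P)"
    unfolding angle_of_pitch_def dint_def DI IP1 IP2 by simp
  define q where "q = fst (Q t)"
  define qs where "qs = snd (Q t)"
  have d1: "((\<lambda>s. fst (V3 s)) has_vector_derivative q *\<^sub>R u2) (at t)"
  proof -
    have "((\<lambda>s. (- sinh ph) *\<^sub>R fst (U1 s) + (- cosh ph) *\<^sub>R fst (U3 s)) has_vector_derivative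
        (- sinh ph) *\<^sub>R (fst (\<kappa> t) *\<^sub>R u2) + (- cosh ph) *\<^sub>R (fst (\<tau> t) *\<^sub>R u2)) (at t)"
      using frenet(1)[of t] frenet(3)[of t]
      unfolding has_dvec_derivative_def dscale_def u2_def
      by (auto intro!: derivative_eq_intros)
    moreover have "(\<lambda>s. fst (V3 s)) = (\<lambda>s. (- sinh ph) *\<^sub>R fst (U1 s) + (- cosh ph) *\<^sub>R fst (U3 s))"
      unfolding V3_def dvadd_def dscale_def dneg_def dsinh_def dcosh_def ph_def by simp
    moreover have "(- sinh ph) *\<^sub>R (fst (\<kappa> t) *\<^sub>R u2) + (- cosh ph) *\<^sub>R (fst (\<tau> t) *\<^sub>R u2) = q *\<^sub>R u2"
      unfolding q_def Q_def dadd_def dneg_def dmul_def dsinh_def dcosh_def ph_def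
      by (simp add: vec_eq_iff algebra_simps)
    ultimately show ?thesis by simp
  qed
  have d2: "((\<lambda>s. snd (V3 s)) has_vector_derivative q *\<^sub>R u2s + qs *\<^sub>R u2) (at t)"
  proof -
    let ?c1 = "- sinh ph" and ?c1s = "- (phs * cosh ph)" and ?c3 = "- cosh ph" and ?c3s = "- (phs * sinh ph)"
    have "((\<lambda>s. ?c1 *\<^sub>R snd (U1 s) + ?c1s *\<^sub>R fst (U1 s) + (?c3 *\<^sub>R snd (U3 s) + ?c3s *\<^sub>R fst (U3 s))) has_vector_derivative
        ?c1 *\<^sub>R (fst (\<kappa> t) *\<^sub>R u2s + snd (\<kappa> t) *\<^sub>R u2) + ?c1s *\<^sub>R (fst (\<kappa> t) *\<^sub>R u2)
        + (?c3 *\<^sub>R (fst (\<tau> t) *\<^sub>R u2s + snd (\<tau> t) *\<^sub>R u2) + ?c3s *\<^sub>R (fst (\<tau> t) *\<^sub>R u2))) (at t)"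
      using frenet(1)[of t] frenet(3)[of t]
      unfolding has_dvec_derivative_def dscale_def u2_def u2s_def
      by (auto intro!: derivative_eq_intros)
    moreover have "(\<lambda>s. snd (V3 s)) = (\<lambda>s. ?c1 *\<^sub>R snd (U1 s) + ?c1s *\<^sub>R fst (U1 s) + (?c3 *\<^sub>R snd (U3 s) + ?c3s *\<^sub>R fst (U3 s)))"
      unfolding V3_def dvadd_def dscale_def dneg_def dsinh_def dcosh_def ph_def phs_def by simp
    moreover have "?c1 *\<^sub>R (fst (\<kappa> t) *\<^sub>R u2s + snd (\<kappa> t) *\<^sub>R u2) + ?c1s *\<^sub>R (fst (\<kappa> t) *\<^sub>R u2)
        + (?c3 *\<^sub>R (fst (\<tau> t) *\<^sub>R u2s + snd (\<tau> t) *\<^sub>R u2) + ?c3s *\<^sub>R (fst (\<tau> t) *\<^sub>R u2)) = q *\<^sub>R u2s + qs *\<^sub>R u2"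
      unfolding q_def qs_def Q_def dadd_def dneg_def dmul_def dsinh_def dcosh_def ph_def phs_def
      by (simp add: vec_eq_iff algebra_simps)
    ultimately show ?thesis by simp
  qed
  have C: "drall V3 t = qs / q"
    unfolding drall_def Let_def vector_derivative_at[OF d1] vector_derivative_at[OF d2]
    using f2 by (simp add: algebra_simps power2_eq_square)
  show "pitch (D t) (V3 t) = integral {0..T} (\<lambda>s. snd (P s))
           \<and> angle_of_pitch (D t) (V3 t) = dneg (dint T P)
           \<and> drall V3 t = snd (Q t) / fst (Q t)"
    using A B C q_def qs_def by simp
qed

end
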